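(* Let $a=(p_a,Rd_a,Wt_a)\in\mathsf{Lab}$ and $\beta\in\mathsf{Lab}\uplus\underline{\mathsf{Lab}}$ with $\mathsf{und}(\beta)=(p_\beta,Rd_\beta,Wt_\beta)$, and assume $Wt_a\subseteq Rd_a$ and $Wt_\beta\subseteq Rd_\beta$. Suppose $A\to_{ann}^{\underline a}A'$ and $A\to_{ann}^{\beta}A''$ with $\underline a\;\iota_{lab}\;\beta$. Then there is an annotation DAG $A'''$ such that $A''\to_{ann}^{\underline a}A'''$ and $\mathsf{diff}(A\to_{ann}^{\underline a}A')=\mathsf{diff}(A''\to_{ann}^{\underline a}A''')$.
   Context: Fix a set $\mathcal{R}$ of memory resources. Let $\mathsf{PID}=(\mathbb{N}_+)^*$ be the set of finite words over the positive integers, with $\preceq$ the prefix order. An annotation DAG is a triple $A=(V,E_R,E_W)$ such that: (1) $V\subseteq(\mathsf{PID}\times\mathbb{N})\cup\{\bot\}$ is finite, $\bot\in V$, and $(p,n)\in V$ implies $(p,n')\in V$ for all $n'\le n$; (2) $E_R,E_W\subseteq V\times\mathcal{R}\times V$, and $(v',r,v),(v'',r,v)\in E_R\cup E_W$ implies $v'=v''$; (3) $E_R\cap E_W=\varnothing$ and the directed graph $(V,E_R\cup E_W)$ is acyclic; (4) if $(v',r,v)\in E_W$ and $v'\neq\bot$ then $(v'',r,v')\in E_W$ for some $v''$; (5) $(v,r,v'),(v,r,v'')\in E_W$ implies $v'=v''$. For $r\in\mathcal{R}$, $\mathsf{last}(r,E_W)$ is $\bot$ if $E_W$ has no edge labelled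 $r$, and otherwise is the final node of the unique path from $\bot$ consisting of all $E_W$-edges labelled $r$. For $p\in\mathsf{PID}$, $\mathsf{max}_p(V)=\max\{n:(p,n)\in V\}$, or $-1$ if there is no such $n$. Let $\mathsf{Lab}=\mathsf{PID}\times2^{\mathcal{R}}\times2^{\mathcal{R}}$ and $\underline{\mathsf{Lab}}=\{\underline{a}:a\in\mathsf{Lab}\}$ a disjoint copy; $\mathsf{und}(a)=\mathsf{und}(\underline a)=a$. For $a=(p,Rd,Wt)\in\mathsf{Lab}$ and annotation DAGs $A_1=(V_1,E_{R1},E_{W1})$, $A_2=(V_2,E_{R2},E_{W2})$, write $A_1\to_{ann}^{a}A_2$ iff, with $v=(p,\mathsf{max}_p(V_1)+1)$ and $\mathsf{newedge}(r,E_W,v)=(\mathsf{last}(r,E_W),r,v)$: $V_2=V_1\cup\{v\}$, $E_{R2}=E_{R1}\cup\{\mathsf{newedge}(r,E_{W1},v): r\in Rd\setminus Wt\}$, $E_{W2}=E_{W1}\cup\{\mathsf{newedge}(r,E_{W1},v): r\in Wt\}$; and write $A_2\to_{ann}^{\underline a}A_1$ iff $A_1\to_{ann}^{a}A_2$. For $\alpha,\beta\in\mathsf{Lab}\uplus\underline{\mathsf{Lab}}$ with $\mathsf{und}(\alpha)=(p_1,Rd_1,Wt_1)$, $\mathsf{und}(\beta)=(p_2,Rd_2,Wt_2)$, define $\alpha\;\iota_{lab}\;\beta$ iff $p_1\not\preceq p_2$, $p_2\not\preceq p_1$, $Rd_1\cap Wt_2=\varnothing$ and $Rd_2\cap Wt_1=\varnothing$.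 For $o:(V,E_R,E_W)\to_{ann}^{\alpha}(V',E'_R,E'_W)$, $\mathsf{diff}(o)=(V'\setminus V,E'_R\setminus E_R,E'_W\setminus E_W)$ if $\alpha\in\mathsf{Lab}$ and $\mathsf{diff}(o)=(V\setminus V',E_R\setminus E'_R,E_W\setminus E'_W)$ if $\alpha\in\underline{\mathsf{Lab}}$. (In the paper, labels arise from basic blocks for which the set of written resources is contained in the set of read resources; this is recorded here as the hypothesis $Wt\subseteq Rd$.) *)

theory Defs
  imports Main "HOL-Library.Sublist"
begin

text \<open>Process identifiers: finite words over positive integers (prefix order = Sublist.prefix).\<close>
type_synonym pid = "nat list"

definition valid_pid :: "pid \<Rightarrow> bool" where
  "valid_pid p \<longleftrightarrow> (\<forall>x\<in>set p. 0 < x)"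

text \<open>Nodes: None is bottom, Some (p,n) is the node (p,n).\<close>
type_synonym node = "(pid \<times> nat) option"
type_synonym 'r edges = "(node \<times> 'r \<times> node) set"
type_synonym 'r ann = "node set \<times> 'r edges \<times> 'r edges"

definition is_ann_dag :: "'r ann \<Rightarrow> bool" where
  "is_ann_dag A \<longleftrightarrow> (case A of (V, ER, EW) \<Rightarrow>
     finite V \<and> None \<in> V
   \<and> (\<forall>p n. Some (p, n) \<in> V \<longrightarrow> valid_pid p)
   \<and> (\<forall>p n n'. Some (p, n) \<in> V \<longrightarrow> n' \<le> n \<longrightarrow> Some (p, n') \<in> V)
   \<and> (\<forall>(u, r, v) \<in> ER \<union> EW. u \<in> V \<and> v \<in> V)
   \<and> (\<forall>u u' r v. (u, r, v) \<in> ER \<union> EW \<longrightarrow> (u', r, v) \<in> ER \<union> EW \<longrightarrow> u = u')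
   \<and> ER \<inter> EW = {}
   \<and> acyclic {(u, v). \<exists>r. (u, r, v) \<in> ER \<union> EW}
   \<and> (\<forall>u r v. (u, r, v) \<in> EW \<longrightarrow> u \<noteq> None \<longrightarrow> (\<exists>w. (w, r, u) \<in> EW))
   \<and> (\<forall>u r v v'. (u, r, v) \<in> EW \<longrightarrow> (u, r, v') \<in> EW \<longrightarrow> v = v'))"

text \<open>last(r, E_W): bottom if there is no r-labelled write edge, otherwise the final node
  of the path of r-labelled write edges from bottom (the node entered by an r-edge and
  left by none).\<close>
definition last_node :: "'r \<Rightarrow> 'r edges \<Rightarrow> node" where
  "last_node r EW = (if \<not> (\<exists>u v. (u, r, v) \<in> EW) then None
     else (THE v. (\<exists>u. (u, r, v) \<in> EW) \<and> \<not> (\<exists>w. (v, r, w) \<in> EW)))"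

definition max_p :: "pid \<Rightarrow> node set \<Rightarrow> int" where
  "max_p p V = (if \<exists>n. Some (p, n) \<in> V then int (Max {n. Some (p, n) \<in> V}) else -1)"

definition newedge :: "'r \<Rightarrow> 'r edges \<Rightarrow> node \<Rightarrow> node \<times> 'r \<times> node" where
  "newedge r EW v = (last_node r EW, r, v)"

type_synonym 'r label = "pid \<times> 'r set \<times> 'r set"

datatype 'r lab = Fwd "'r label" | Bwd "'r label"

fun und :: "'r lab \<Rightarrow> 'r label" where
  "und (Fwd a) = a" | "und (Bwd a) = a"

definition ann_fwd :: "'r ann \<Rightarrow> 'r label \<Rightarrow> 'r ann \<Rightarrow> bool" where
  "ann_fwd A1 a A2 \<longleftrightarrow> is_ann_dag A1 \<and> is_ann_dag A2 \<and>
     (case A1 of (V1, ER1, EW1) \<Rightarrow> case A2 of (V2, ER2, EW2) \<Rightarrow> case a of (p, Rd, Wt) \<Rightarrow>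
       (let v = Some (p, nat (max_p p V1 + 1)) in
          V2 = V1 \<union> {v}
        \<and> ER2 = ER1 \<union> {newedge r EW1 v | r. r \<in> Rd - Wt}
        \<and> EW2 = EW1 \<union> {newedge r EW1 v | r. r \<in> Wt}))"

fun ann_step :: "'r ann \<Rightarrow> 'r lab \<Rightarrow> 'r ann \<Rightarrow> bool" where
  "ann_step A1 (Fwd a) A2 = ann_fwd A1 a A2"
| "ann_step A2 (Bwd a) A1 = ann_fwd A1 a A2"

definition iota_lab :: "'r lab \<Rightarrow> 'r lab \<Rightarrow> bool" where
  "iota_lab \<alpha> \<beta> \<longleftrightarrow> (case und \<alpha> of (p1, Rd1, Wt1) \<Rightarrow> case und \<beta> of (p2, Rd2, Wt2) \<Rightarrow>
     \<not> prefix p1 p2 \<and> \<not> prefix p2 p1 \<and> Rd1 \<inter> Wt2 = {} \<and> Rd2 \<inter> Wt1 = {})"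

fun diff :: "'r ann \<Rightarrow> 'r lab \<Rightarrow> 'r ann \<Rightarrow> 'r ann" where
  "diff (V, ER, EW) (Fwd a) (V', ER', EW') = (V' - V, ER' - ER, EW' - EW)"
| "diff (V, ER, EW) (Bwd a) (V', ER', EW') = (V - V', ER - ER', EW - EW')"

end

theory Submission
  imports Defs
begin

lemma dagD:
  assumes "is_ann_dag (V,R,W)"
  shows "finite V" "None \<in> V" "\<forall>p n. Some (p, n) \<in> V \<longrightarrow> valid_pid p"
    "\<forall>p n n'. Some (p, n) \<in> V \<longrightarrow> n' \<le> n \<longrightarrow> Some (p, n') \<in> V"
    "\<forall>(u, r, v) \<in> R \<union> W. u \<in> V \<and> v \<in> V"
    "\<forall>u u' r v. (u, r, v) \<in> R \<union> W \<longrightarrow> (u', r, v) \<in> R \<union> W \<longrightarrow> u = u'"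
    "R \<inter> W = {}"
    "acyclic {(u, v). \<exists>r. (u, r, v) \<in> R \<union> W}"
    "\<forall>u r v. (u, r, v) \<in> W \<longrightarrow> u \<noteq> None \<longrightarrow> (\<exists>w. (w, r, u) \<in> W)"
    "\<forall>u r v v'. (u, r, v) \<in> W \<longrightarrow> (u, r, v') \<in> W \<longrightarrow> v = v'"
  using assms unfolding is_ann_dag_def prod.case by blast+

lemma dagI:
  assumes "finite V" "None \<in> V" "\<forall>p n. Some (p, n) \<in> V \<longrightarrow> valid_pid p"
    "\<forall>p n n'. Some (p, n) \<in> V \<longrightarrow> n' \<le> n \<longrightarrow> Some (p, n') \<in> V"
    "\<forall>(u, r, v) \<in> R \<union> W. u \<in> V \<and> v \<in> V"
    "\<forall>u u' r v. (u, r, v) \<in> R \<union> W \<longrightarrow> (u', r, v) \<in> R \<union> W \<longrightarrow> u = u'"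
    "R \<inter> W = {}"
    "acyclic {(u, v). \<exists>r. (u, r, v) \<in> R \<union> W}"
    "\<forall>u r v. (u, r, v) \<in> W \<longrightarrow> u \<noteq> None \<longrightarrow> (\<exists>w. (w, r, u) \<in> W)"
    "\<forall>u r v v'. (u, r, v) \<in> W \<longrightarrow> (u, r, v') \<in> W \<longrightarrow> v = v'"
  shows "is_ann_dag (V,R,W)"
  using assms unfolding is_ann_dag_def prod.case by blast

lemma dag_edges:
  assumes "is_ann_dag (V,R,W)" "(u,r,x) \<in> R \<union> W" shows "u \<in> V \<and> x \<in> V"
proof -
  from bspec[OF dagD(5)[OF assms(1)] assms(2)] show ?thesis by simp
qed

lemma dag_lt:
  assumes "is_ann_dag (V,R,W)" "Some (p,n) \<in> V" shows "n < nat (max_p p V + 1)"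
proof -
  have fV: "finite V" using dagD(1)[OF assms(1)] .
  have "{n. Some (p,n) \<in> V} \<subseteq> (\<lambda>x. snd (the x)) ` V"
  proof
    fix k assume "k \<in> {n. Some (p,n) \<in> V}"
    then have "Some (p,k) \<in> V" by simp
    moreover have "k = snd (the (Some (p,k)))" by simp
    ultimately show "k \<in> (\<lambda>x. snd (the x)) ` V" by (rule rev_image_eqI)
  qed
  then have fin: "finite {n. Some (p,n) \<in> V}" using fV finite_subset by blast
  have "n \<le> Max {n. Some (p,n) \<in> V}" using fin assms(2) by simp
  moreover have "max_p p V = int (Max {n. Some (p,n) \<in> V})" using assms(2) unfolding max_p_def by auto
  ultimately show ?thesis by simp
qed

lemma dag_notin:
  assumes "is_ann_dag (V,R,W)" shows "Some (p, nat (max_p p V + 1)) \<notin> V"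
  using dag_lt[OF assms] by blast

lemma last_cong:
  assumes "\<And>u x. (u,r,x) \<in> W \<longleftrightarrow> (u,r,x) \<in> W'" shows "last_node r W = last_node r W'"
  using assms unfolding last_node_def by simp

lemma maxp_cong:
  assumes "\<And>n. Some (p,n) \<in> V \<longleftrightarrow> Some (p,n) \<in> V'" shows "max_p p V = max_p p V'"
  using assms unfolding max_p_def by simp

lemma last_in:
  assumes dag: "is_ann_dag (V,R,W)" shows "last_node r W \<in> V"
proof (cases "\<exists>u v. (u,r,v)\<in>W")
  case False then show ?thesis using dagD(2)[OF dag] by (simp add: last_node_def)
next
  case True
  define E where "E = {(u,x). (u,r,x)\<in>W}"
  have EV: "E \<subseteq> V \<times> V" using dag_edges[OF dag] by (auto simp: E_def)
  have "finite V" using dagD(1)[OF dag] .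
  then have fin: "finite E" using EV finite_subset by blast
  have "E \<subseteq> {(u, v). \<exists>r. (u, r, v) \<in> R \<union> W}" by (auto simp: E_def)
  then have acyc: "acyclic E" using dagD(8)[OF dag] acyclic_subset by blast
  have wf: "wf E" using fin acyc finite_acyclic_wf by blast
  have wfc: "wf (E\<inverse>)" using fin acyc finite_acyclic_wf_converse by blast
  have d10: "\<forall>u r v v'. (u, r, v) \<in> W \<longrightarrow> (u, r, v') \<in> W \<longrightarrow> v = v'" by (rule dagD(10)[OF dag])
  have sv: "single_valued E" unfolding single_valued_def E_def using d10 by blast
  have d9: "\<forall>u r v. (u, r, v) \<in> W \<longrightarrow> u \<noteq> None \<longrightarrow> (\<exists>w. (w, r, u) \<in> W)" by (rule dagD(9)[OF dag])
  have reach: "x \<in> Range E \<longrightarrow> (None,x) \<in> E\<^sup>+" for x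
  proof (induction x rule: wf_induct_rule[OF wf])
    case (1 x)
    show ?case
    proof
      assume "x \<in> Range E"
      then obtain u where u: "(u,x) \<in> E" by blast
      show "(None,x) \<in> E\<^sup>+"
      proof (cases "u = None")
        case True then show ?thesis using u by auto
      next
        case False
        have "(u,r,x) \<in> W" using u by (simp add: E_def)
        then obtain w where "(w,r,u) \<in> W" using d9 False by blast
        then have "u \<in> Range E" by (auto simp: E_def)
        then have "(None,u) \<in> E\<^sup>+" using 1 u by blast
        then show ?thesis using u by (rule trancl_into_trancl)
      qed
    qed
  qed
  have ne: "Range E \<noteq> {}" using True by (auto simp: E_def)
  obtain m where m: "m \<in> Range E" "\<forall>y. (y,m) \<in> E\<inverse> \<longrightarrow> y \<notin> Range E"
    using wfc ne unfolding wf_eq_minimal by blast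
  have msink: "\<forall>y. (m,y) \<notin> E" using m by blast
  have uniq: "m2 = m" if "m2 \<in> Range E" "\<forall>y. (m2,y) \<notin> E" for m2
  proof -
    have "(None,m) \<in> E\<^sup>*" by (rule trancl_into_rtrancl[OF reach[rule_format, OF m(1)]])
    moreover have "(None,m2) \<in> E\<^sup>*" by (rule trancl_into_rtrancl[OF reach[rule_format, OF that(1)]])
    ultimately have "(m,m2) \<in> E\<^sup>* \<or> (m2,m) \<in> E\<^sup>*" by (intro single_valued_confluent[OF sv])
    then show ?thesis
    proof
      assume h: "(m,m2) \<in> E\<^sup>*"
      show ?thesis
      proof (rule converse_rtranclE[OF h])
        fix y assume "(m,y) \<in> E" with msink show ?thesis by blast
      qed simp
    next
      assume h: "(m2,m) \<in> E\<^sup>*"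
      show ?thesis
      proof (rule converse_rtranclE[OF h])
        fix y assume "(m2,y) \<in> E" with that(2) show ?thesis by blast
      qed simp
    qed
  qed
  have P: "(\<exists>u. (u, r, v) \<in> W) \<and> \<not> (\<exists>w. (v, r, w) \<in> W) \<longleftrightarrow> v \<in> Range E \<and> (\<forall>y. (v,y) \<notin> E)" for v
    by (auto simp: E_def)
  have "last_node r W = (THE v. v \<in> Range E \<and> (\<forall>y. (v,y) \<notin> E))"
    using True unfolding last_node_def P by simp
  also have "\<dots> = m" proof (rule the_equality)
    show "m \<in> Range E \<and> (\<forall>y. (m, y) \<notin> E)" using m(1) msink by blast
  next
    fix x assume "x \<in> Range E \<and> (\<forall>y. (x, y) \<notin> E)"
    then show "x = m" using uniq by blast
  qed
  finally show ?thesis using m EV by auto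
qed

lemma dag_remove:
  assumes dag: "is_ann_dag (V,R,W)"
    and R': "R' \<subseteq> R" and W': "W' \<subseteq> W"
    and ends: "\<And>u r x. (u,r,x) \<in> R' \<union> W' \<Longrightarrow> u \<in> V - {v} \<and> x \<in> V - {v}"
    and rem: "\<And>u r x. (u,r,x) \<in> W - W' \<Longrightarrow> x = v"
    and down: "\<And>p n n'. Some (p,n) \<in> V - {v} \<Longrightarrow> n' \<le> n \<Longrightarrow> Some (p,n') \<noteq> v"
    and vN: "v \<noteq> None"
  shows "is_ann_dag (V - {v}, R', W')"
proof (rule dagI)
  note d = dagD[OF dag]
  show "finite (V - {v})" using d(1) by simp
  show "None \<in> V - {v}" using d(2) vN by blast
  show "\<forall>p n. Some (p, n) \<in> V - {v} \<longrightarrow> valid_pid p" using d(3) by blast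
  show "\<forall>p n n'. Some (p, n) \<in> V - {v} \<longrightarrow> n' \<le> n \<longrightarrow> Some (p, n') \<in> V - {v}"
  proof (intro allI impI)
    fix p n n' assume h: "Some (p, n) \<in> V - {v}" "n' \<le> n"
    then have "Some (p, n') \<in> V" using d(4) by blast
    moreover have "Some (p,n') \<noteq> v" using down h by blast
    ultimately show "Some (p, n') \<in> V - {v}" by blast
  qed
  show "\<forall>(u, r, x) \<in> R' \<union> W'. u \<in> V - {v} \<and> x \<in> V - {v}"
  proof
    fix e assume "e \<in> R' \<union> W'"
    then show "case e of (u, r, x) \<Rightarrow> u \<in> V - {v} \<and> x \<in> V - {v}"
      using ends by (cases e) auto
  qed
  show "\<forall>u u' r x. (u, r, x) \<in> R' \<union> W' \<longrightarrow> (u', r, x) \<in> R' \<union> W' \<longrightarrow> u = u'"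
  proof (intro allI impI)
    fix u u' r x assume "(u, r, x) \<in> R' \<union> W'" "(u', r, x) \<in> R' \<union> W'"
    then have "(u, r, x) \<in> R \<union> W" "(u', r, x) \<in> R \<union> W" using R' W' by blast+
    then show "u = u'" using d(6) by blast
  qed
  show "R' \<inter> W' = {}" using d(7) R' W' by blast
  show "acyclic {(u, x). \<exists>r. (u, r, x) \<in> R' \<union> W'}"
    by (rule acyclic_subset[OF d(8)]) (use R' W' in blast)
  show "\<forall>u r x. (u, r, x) \<in> W' \<longrightarrow> u \<noteq> None \<longrightarrow> (\<exists>w. (w, r, u) \<in> W')"
  proof (intro allI impI)
    fix u r x assume h: "(u, r, x) \<in> W'" "u \<noteq> None"
    have "(u, r, x) \<in> W" using h(1) W' by blast
    then obtain w where w: "(w,r,u) \<in> W" using d(9) h(2) by blast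
    have "u \<noteq> v" using ends h(1) by blast
    then have "(w,r,u) \<in> W'" using rem w by blast
    then show "\<exists>w. (w, r, u) \<in> W'" by blast
  qed
  show "\<forall>u r x x'. (u, r, x) \<in> W' \<longrightarrow> (u, r, x') \<in> W' \<longrightarrow> x = x'"
  proof (intro allI impI)
    fix u r x x' assume "(u, r, x) \<in> W'" "(u, r, x') \<in> W'"
    then have "(u, r, x) \<in> W" "(u, r, x') \<in> W" using W' by blast+
    then show "x = x'" using d(10) by blast
  qed
qed

lemma ann_fwd_unfold:
  assumes "ann_fwd (V1,R1,W1) (p,Rd,Wt) (V2,R2,W2)"
  shows "is_ann_dag (V1,R1,W1) \<and> is_ann_dag (V2,R2,W2) \<and> V2 = V1 \<union> {Some (p, nat (max_p p V1 + 1))}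
    \<and> R2 = R1 \<union> {newedge r W1 (Some (p, nat (max_p p V1 + 1))) | r. r \<in> Rd - Wt}
    \<and> W2 = W1 \<union> {newedge r W1 (Some (p, nat (max_p p V1 + 1))) | r. r \<in> Wt}"
  using assms unfolding ann_fwd_def Let_def case_prod_conv by blast

theorem mainTheorem4:
  fixes a :: "'r label" and \<beta> :: "'r lab" and A A' A'' :: "'r ann"
  assumes "valid_pid (fst a)" and "valid_pid (fst (und \<beta>))"
    and "snd (snd a) \<subseteq> fst (snd a)"
    and "snd (snd (und \<beta>)) \<subseteq> fst (snd (und \<beta>))"
    and "ann_step A (Bwd a) A'"
    and "ann_step A \<beta> A''"
    and "iota_lab (Bwd a) \<beta>"
  shows "\<exists>A'''. ann_step A'' (Bwd a) A''' \<and> diff A (Bwd a) A' = diff A'' (Bwd a) A'''"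
proof -
  obtain pa Rda Wta where a: "a = (pa,Rda,Wta)" by (cases a)
  obtain V1 R1 W1 where A': "A' = (V1,R1,W1)" by (cases A')
  obtain VA RA WA where A: "A = (VA,RA,WA)" by (cases A)
  obtain V2 R2 W2 where A'': "A'' = (V2,R2,W2)" by (cases A'')
  have WtRda: "Wta \<subseteq> Rda" using assms(3) a by simp
  define v where "v = Some (pa, nat (max_p pa V1 + 1))"
  define NR where "NR = {newedge r W1 v | r. r \<in> Rda - Wta}"
  define NW where "NW = {newedge r W1 v | r. r \<in> Wta}"
  have fw: "ann_fwd A' a A" using assms(5) by simp
  note H = ann_fwd_unfold[OF fw[unfolded A' A a]]
  then have dag1: "is_ann_dag (V1,R1,W1)" and dagA: "is_ann_dag (VA,RA,WA)"
    and VA: "VA = V1 \<union> {v}" and RA: "RA = R1 \<union> NR" and WA: "WA = W1 \<union> NW"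
    unfolding v_def NR_def NW_def by blast+
  have vV1: "v \<notin> V1" unfolding v_def using dag_notin[OF dag1] .
  have vN: "v \<noteq> None" by (simp add: v_def)
  have NRmem: "(u,r,x) \<in> NR \<longleftrightarrow> r \<in> Rda - Wta \<and> u = last_node r W1 \<and> x = v" for u r x
    unfolding NR_def newedge_def by auto
  have NWmem: "(u,r,x) \<in> NW \<longleftrightarrow> r \<in> Wta \<and> u = last_node r W1 \<and> x = v" for u r x
    unfolding NW_def newedge_def by auto
  have E1: "u \<in> V1 \<and> x \<in> V1" if "(u,r,x) \<in> R1 \<union> W1" for u r x
    using dag_edges[OF dag1 that] .
  have key: "v \<in> V2 \<and> NR \<subseteq> R2 \<and> NW \<subseteq> W2 \<and> is_ann_dag (V2 - {v}, R2 - NR, W2 - NW)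
     \<and> (\<forall>n. Some (pa,n) \<in> V2 - {v} \<longleftrightarrow> Some (pa,n) \<in> V1)
     \<and> (\<forall>r\<in>Rda. \<forall>u x. (u,r,x) \<in> W2 - NW \<longleftrightarrow> (u,r,x) \<in> W1)"
  proof (cases \<beta>)
    case (Fwd b)
    obtain pb Rdb Wtb where b: "b = (pb,Rdb,Wtb)" by (cases b)
    have WtRdb: "Wtb \<subseteq> Rdb" using assms(4) Fwd b by simp
    have io: "\<not> prefix pa pb" "Rda \<inter> Wtb = {}" "Rdb \<inter> Wta = {}"
      using assms(7) Fwd b a by (auto simp: iota_lab_def)
    have pab: "pa \<noteq> pb" using io(1) by auto
    define w where "w = Some (pb, nat (max_p pb VA + 1))"
    define NR' where "NR' = {newedge r WA w | r. r \<in> Rdb - Wtb}"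
    define NW' where "NW' = {newedge r WA w | r. r \<in> Wtb}"
    have "ann_fwd A b A''" using assms(6) Fwd by simp
    note H = ann_fwd_unfold[OF this[unfolded A'' A b]]
    then have dag2: "is_ann_dag (V2,R2,W2)" and V2: "V2 = VA \<union> {w}" and R2: "R2 = RA \<union> NR'"
      and W2: "W2 = WA \<union> NW'"
      unfolding w_def NR'_def NW'_def by blast+
    have wv: "w \<noteq> v" using pab by (simp add: w_def v_def)
    have lastWA: "last_node r WA = last_node r W1" if "r \<notin> Wta" for r
      by (rule last_cong) (use that in \<open>auto simp: WA NWmem\<close>)
    have lastWA': "last_node r WA = last_node r W1" if "r \<in> Rdb" for r
      using lastWA io(3) that by blast
    have NR'mem: "(u,r,x) \<in> NR' \<longleftrightarrow> r \<in> Rdb - Wtb \<and> u = last_node r W1 \<and> x = w" for u r x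
      unfolding NR'_def newedge_def by (auto simp: lastWA')
    have NW'mem: "(u,r,x) \<in> NW' \<longleftrightarrow> r \<in> Wtb \<and> u = last_node r W1 \<and> x = w" for u r x
      unfolding NW'_def newedge_def using WtRdb by (auto simp: lastWA')
    have L1: "last_node r W1 \<in> V1" for r using last_in[OF dag1] .
    have V3: "V2 - {v} = V1 \<union> {w}" using V2 VA wv vV1 by auto
    have R3: "R2 - NR = R1 \<union> NR'"
    proof -
      have "R1 \<inter> NR = {}" using E1 NRmem vV1 by fastforce
      moreover have "NR' \<inter> NR = {}" using NRmem NR'mem wv by auto
      ultimately show ?thesis using R2 RA by blast
    qed
    have W3: "W2 - NW = W1 \<union> NW'"
    proof -
      have "W1 \<inter> NW = {}" using E1 NWmem vV1 by fastforce
      moreover have "NW' \<inter> NW = {}" using NWmem NW'mem wv by auto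
      ultimately show ?thesis using W2 WA by blast
    qed
    have dag3: "is_ann_dag (V2 - {v}, R2 - NR, W2 - NW)"
    proof (rule dag_remove[OF dag2])
      show "R2 - NR \<subseteq> R2" "W2 - NW \<subseteq> W2" by auto
      show "u \<in> V2 - {v} \<and> x \<in> V2 - {v}" if "(u, r, x) \<in> (R2 - NR) \<union> (W2 - NW)" for u r x
      proof -
        have "(u,r,x) \<in> R1 \<union> W1 \<or> (u,r,x) \<in> NR' \<or> (u,r,x) \<in> NW'" using that R3 W3 by blast
        then have "u \<in> V1 \<and> (x \<in> V1 \<or> x = w)"
        proof (elim disjE)
          assume "(u,r,x) \<in> R1 \<union> W1" then show ?thesis using E1 by blast
        next
          assume "(u,r,x) \<in> NR'" then show ?thesis using NR'mem L1 by simp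
        next
          assume "(u,r,x) \<in> NW'" then show ?thesis using NW'mem L1 by simp
        qed
        then show ?thesis using V3 by blast
      qed
      show "x = v" if "(u, r, x) \<in> W2 - (W2 - NW)" for u r x using that NWmem by auto
      show "Some (p, n') \<noteq> v" if "Some (p, n) \<in> V2 - {v}" "n' \<le> n" for p n n'
      proof
        assume "Some (p, n') = v"
        then have pp: "p = pa" "n' = nat (max_p pa V1 + 1)" by (auto simp: v_def)
        then have "Some (pa,n) \<in> V1" using that(1) V3 pab by (auto simp: w_def)
        then show False using dag_lt[OF dag1] pp that(2) by fastforce
      qed
      show "v \<noteq> None" by (rule vN)
    qed
    show ?thesis
    proof (intro conjI)
      show "v \<in> V2" "NR \<subseteq> R2" "NW \<subseteq> W2" using V2 VA R2 RA W2 WA by auto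
      show "is_ann_dag (V2 - {v}, R2 - NR, W2 - NW)" by (rule dag3)
      show "\<forall>n. Some (pa,n) \<in> V2 - {v} \<longleftrightarrow> Some (pa,n) \<in> V1" unfolding V3 using pab by (auto simp: w_def)
      show "\<forall>r\<in>Rda. \<forall>u x. (u,r,x) \<in> W2 - NW \<longleftrightarrow> (u,r,x) \<in> W1" unfolding W3 using NW'mem io(2) by auto
    qed
  next
    case (Bwd b)
    obtain pb Rdb Wtb where b: "b = (pb,Rdb,Wtb)" by (cases b)
    have io: "\<not> prefix pa pb" "Rda \<inter> Wtb = {}" "Rdb \<inter> Wta = {}"
      using assms(7) Bwd b a by (auto simp: iota_lab_def)
    have pab: "pa \<noteq> pb" using io(1) by auto
    define w where "w = Some (pb, nat (max_p pb V2 + 1))"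
    define NR2 where "NR2 = {newedge r W2 w | r. r \<in> Rdb - Wtb}"
    define NW2 where "NW2 = {newedge r W2 w | r. r \<in> Wtb}"
    have "ann_fwd A'' b A" using assms(6) Bwd by simp
    note H = ann_fwd_unfold[OF this[unfolded A'' A b]]
    then have dag2: "is_ann_dag (V2,R2,W2)" and V2: "VA = V2 \<union> {w}" and R2: "RA = R2 \<union> NR2"
      and W2: "WA = W2 \<union> NW2"
      unfolding w_def NR2_def NW2_def by blast+
    have wv: "w \<noteq> v" using pab by (simp add: w_def v_def)
    have NR2mem: "(u,r,x) \<in> NR2 \<Longrightarrow> x = w" for u r x unfolding NR2_def newedge_def by auto
    have NW2mem: "(u,r,x) \<in> NW2 \<Longrightarrow> r \<in> Wtb \<and> x = w" for u r x unfolding NW2_def newedge_def by auto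
    have vV2: "v \<in> V2" using V2 VA wv by auto
    have NRsub: "NR \<subseteq> R2"
    proof
      fix e assume e: "e \<in> NR"
      obtain u r x where ex: "e = (u,r,x)" by (cases e)
      have xv: "x = v" using e ex NRmem by simp
      have "e \<in> R2 \<union> NR2" using e RA R2 by blast
      moreover have "e \<notin> NR2" using xv ex NR2mem wv by blast
      ultimately show "e \<in> R2" by blast
    qed
    have NWsub: "NW \<subseteq> W2"
    proof
      fix e assume e: "e \<in> NW"
      obtain u r x where ex: "e = (u,r,x)" by (cases e)
      have xv: "x = v" using e ex NWmem by simp
      have "e \<in> W2 \<union> NW2" using e WA W2 by blast
      moreover have "e \<notin> NW2" using xv ex NW2mem wv by blast
      ultimately show "e \<in> W2" by blast
    qed
    have dag3: "is_ann_dag (V2 - {v}, R2 - NR, W2 - NW)"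
    proof (rule dag_remove[OF dag2])
      show "R2 - NR \<subseteq> R2" "W2 - NW \<subseteq> W2" by auto
      show "u \<in> V2 - {v} \<and> x \<in> V2 - {v}" if h: "(u, r, x) \<in> (R2 - NR) \<union> (W2 - NW)" for u r x
      proof -
        have "(u,r,x) \<in> R1 \<union> W1" using h R2 RA W2 WA by blast
        then have "u \<in> V1 \<and> x \<in> V1" by (rule E1)
        moreover have "u \<in> V2 \<and> x \<in> V2" using dag_edges[OF dag2] h by blast
        ultimately show ?thesis using vV1 by blast
      qed
      show "x = v" if "(u, r, x) \<in> W2 - (W2 - NW)" for u r x using that NWmem by auto
      show "Some (p, n') \<noteq> v" if "Some (p, n) \<in> V2 - {v}" "n' \<le> n" for p n n'
      proof
        assume "Some (p, n') = v"
        then have pp: "p = pa" "n' = nat (max_p pa V1 + 1)" by (auto simp: v_def)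
        then have "Some (pa,n) \<in> V1" using that(1) V2 VA by auto
        then show False using dag_lt[OF dag1] pp that(2) by fastforce
      qed
      show "v \<noteq> None" by (rule vN)
    qed
    show ?thesis
    proof (intro conjI)
      show "v \<in> V2" "NR \<subseteq> R2" "NW \<subseteq> W2" using vV2 NRsub NWsub by auto
      show "is_ann_dag (V2 - {v}, R2 - NR, W2 - NW)" by (rule dag3)
      show "\<forall>n. Some (pa,n) \<in> V2 - {v} \<longleftrightarrow> Some (pa,n) \<in> V1"
        using V2 VA vV1 pab by (auto simp: w_def)
      show "\<forall>r\<in>Rda. \<forall>u x. (u,r,x) \<in> W2 - NW \<longleftrightarrow> (u,r,x) \<in> W1"
      proof (intro ballI allI iffI)
        fix r u x assume "r \<in> Rda" "(u,r,x) \<in> W2 - NW"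
        then show "(u,r,x) \<in> W1" using W2 WA by blast
      next
        fix r u x assume r: "r \<in> Rda" and h: "(u,r,x) \<in> W1"
        then have "(u,r,x) \<in> W2" using W2 WA NW2mem io(2) by blast
        moreover have "x \<in> V1" using E1 h by blast
        then have "(u,r,x) \<notin> NW" using NWmem[of u r x] vV1 by blast
        ultimately show "(u,r,x) \<in> W2 - NW" by blast
      qed
    qed
  qed
  then have vV2: "v \<in> V2" and NRsub: "NR \<subseteq> R2" and NWsub: "NW \<subseteq> W2"
    and dag3: "is_ann_dag (V2 - {v}, R2 - NR, W2 - NW)"
    and pn: "\<And>n. Some (pa,n) \<in> V2 - {v} \<longleftrightarrow> Some (pa,n) \<in> V1"
    and re: "\<And>r u x. r \<in> Rda \<Longrightarrow> (u,r,x) \<in> W2 - NW \<longleftrightarrow> (u,r,x) \<in> W1" by auto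
  have mp: "max_p pa (V2 - {v}) = max_p pa V1" by (rule maxp_cong) (rule pn)
  have lst: "last_node r (W2 - NW) = last_node r W1" if "r \<in> Rda" for r
    by (rule last_cong) (rule re[OF that])
  have dag2: "is_ann_dag (V2,R2,W2)" using assms(6) A'' A
    by (cases \<beta>) (auto simp: ann_fwd_def)
  have ne: "newedge r (W2 - NW) v = newedge r W1 v" if "r \<in> Rda" for r
    using lst[OF that] by (simp add: newedge_def)
  have NR': "{newedge r (W2 - NW) v | r. r \<in> Rda - Wta} = NR"
    unfolding NR_def
  proof (intro Collect_cong iffI)
    fix e assume "\<exists>r. e = newedge r (W2 - NW) v \<and> r \<in> Rda - Wta"
    then obtain r where "e = newedge r (W2 - NW) v" "r \<in> Rda - Wta" by blast
    then show "\<exists>r. e = newedge r W1 v \<and> r \<in> Rda - Wta" using ne by auto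
  next
    fix e assume "\<exists>r. e = newedge r W1 v \<and> r \<in> Rda - Wta"
    then obtain r where "e = newedge r W1 v" "r \<in> Rda - Wta" by blast
    then show "\<exists>r. e = newedge r (W2 - NW) v \<and> r \<in> Rda - Wta" using ne[of r] by (intro exI[of _ r]) auto
  qed
  have ne': "newedge r (W2 - NW) v = newedge r W1 v" if "r \<in> Wta" for r
    using ne WtRda that by blast
  have NWx: "{newedge r (W2 - NW) v | r. r \<in> Wta} = {newedge r W1 v | r. r \<in> Wta}"
  proof (rule set_eqI)
    fix e
    show "e \<in> {newedge r (W2 - NW) v | r. r \<in> Wta} \<longleftrightarrow> e \<in> {newedge r W1 v | r. r \<in> Wta}"
    proof
      assume "e \<in> {newedge r (W2 - NW) v | r. r \<in> Wta}"
      then obtain r where r: "e = newedge r (W2 - NW) v" "r \<in> Wta" by blast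
      then have "e = newedge r W1 v" using ne' by simp
      then show "e \<in> {newedge r W1 v | r. r \<in> Wta}" using r(2) by blast
    next
      assume "e \<in> {newedge r W1 v | r. r \<in> Wta}"
      then obtain r where r: "e = newedge r W1 v" "r \<in> Wta" by blast
      then have "e = newedge r (W2 - NW) v" using ne' by simp
      then show "e \<in> {newedge r (W2 - NW) v | r. r \<in> Wta}" using r(2) by blast
    qed
  qed
  have NW': "{newedge r (W2 - NW) v | r. r \<in> Wta} = NW"
    by (rule trans[OF NWx NW_def[symmetric]])
  have step: "ann_step A'' (Bwd a) (V2 - {v}, R2 - NR, W2 - NW)"
    using dag2 dag3 vV2 NRsub NWsub NR' NW' mp
    unfolding ann_step.simps ann_fwd_def A'' a by (auto simp: Let_def v_def[symmetric])
  have d1: "VA - V1 = {v}" using VA vV1 by auto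
  have d2: "RA - R1 = NR" using RA E1 NRmem vV1 by fastforce
  have d3: "WA - W1 = NW" using WA E1 NWmem vV1 by fastforce
  have "diff A (Bwd a) A' = diff A'' (Bwd a) (V2 - {v}, R2 - NR, W2 - NW)"
    unfolding A A' A'' a using d1 d2 d3 vV2 NRsub NWsub by auto
  then show ?thesis using step by blast
qed

end
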